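(* Let $\hat f:L^2(\Omega,\mathcal{F},\mathbb{P};H)\to U$ be Fréchet differentiable at $X_0\in L^2(\Omega,H)$. Then $$m_{D\hat f(X_0)}(A)u:=D\hat f(X_0)(u\mathbf{1}_A),\qquad A\in\mathcal{F},\ u\in H,$$ defines a vector measure $m_{D\hat f(X_0)}:\mathcal{F}\to L(H,U)$, i.e. $m_{D\hat f(X_0)}(\emptyset)=0$ and $m_{D\hat f(X_0)}(\bigcup_i A_i)=\sum_i m_{D\hat f(X_0)}(A_i)$ (convergence in operator norm) for every sequence of pairwise disjoint $A_i\in\mathcal{F}$.
   Context: $(\Omega,\mathcal{F},\mathbb{P})$ is a probability space; $H,U$ are separable real Hilbert spaces; $L(H,U)$ denotes bounded linear operators with the operator norm. *)

theory Defs
  imports "HOL-Probability.Probability"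
begin

definition L2 :: "'a measure \<Rightarrow> ('a \<Rightarrow> 'h::{real_normed_vector, second_countable_topology}) set" where
  "L2 M = {X. X \<in> borel_measurable M \<and> integrable M (\<lambda>\<omega>. (norm (X \<omega>))\<^sup>2)}"

definition L2norm :: "'a measure \<Rightarrow> ('a \<Rightarrow> 'h::real_normed_vector) \<Rightarrow> real" where
  "L2norm M X = sqrt (\<integral>\<omega>. (norm (X \<omega>))\<^sup>2 \<partial>M)"

text \<open>f is well defined on L^2, i.e. respects almost-everywhere equality.\<close>
definition respects_ae :: "'a measure \<Rightarrow> (('a \<Rightarrow> 'h::{real_normed_vector, second_countable_topology}) \<Rightarrow> 'u) \<Rightarrow> bool" where
  "respects_ae M f \<longleftrightarrow> (\<forall>X\<in>L2 M. \<forall>Y\<in>L2 M. (AE \<omega> in M. X \<omega> = Y \<omega>) \<longrightarrow> f X = f Y)"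

definition bounded_linear_L2 :: "'a measure \<Rightarrow> (('a \<Rightarrow> 'h::{real_normed_vector, second_countable_topology}) \<Rightarrow> 'u::real_normed_vector) \<Rightarrow> bool" where
  "bounded_linear_L2 M D \<longleftrightarrow>
     (\<forall>X\<in>L2 M. \<forall>Y\<in>L2 M. D (\<lambda>\<omega>. X \<omega> + Y \<omega>) = D X + D Y) \<and>
     (\<forall>c. \<forall>X\<in>L2 M. D (\<lambda>\<omega>. c *\<^sub>R X \<omega>) = c *\<^sub>R D X) \<and>
     (\<exists>K. \<forall>X\<in>L2 M. norm (D X) \<le> K * L2norm M X)"

definition frechet_deriv_L2 :: "'a measure \<Rightarrow> (('a \<Rightarrow> 'h::{real_normed_vector, second_countable_topology}) \<Rightarrow> 'u::real_normed_vector)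
    \<Rightarrow> ('a \<Rightarrow> 'h) \<Rightarrow> (('a \<Rightarrow> 'h) \<Rightarrow> 'u) \<Rightarrow> bool" where
  "frechet_deriv_L2 M f X0 D \<longleftrightarrow> bounded_linear_L2 M D \<and>
     (\<forall>e>0. \<exists>d>0. \<forall>Y\<in>L2 M. L2norm M Y < d \<longrightarrow>
        norm (f (\<lambda>\<omega>. X0 \<omega> + Y \<omega>) - f X0 - D Y) \<le> e * L2norm M Y)"

end

theory Submission
  imports Defs
begin

lemma ind_L2:
  fixes u :: "'h::{real_normed_vector, second_countable_topology}"
  assumes P: "prob_space M" and A: "A \<in> sets M"
  shows "(\<lambda>\<omega>. indicator A \<omega> *\<^sub>R u) \<in> L2 M"
    and "L2norm M (\<lambda>\<omega>. indicator A \<omega> *\<^sub>R u) = sqrt (measure M A) * norm u"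
proof -
  interpret prob_space M by fact
  have eq: "(\<lambda>\<omega>. (norm (indicator A \<omega> *\<^sub>R u))\<^sup>2) = (\<lambda>\<omega>. indicator A \<omega> * (norm u)\<^sup>2)"
    by (auto simp: indicator_def fun_eq_iff)
  have int: "integrable M (\<lambda>\<omega>. indicator A \<omega> * (norm u)\<^sup>2)"
    using A by (intro integrable_mult_left) (simp add: integrable_indicator_iff less_top[symmetric])
  show "(\<lambda>\<omega>. indicator A \<omega> *\<^sub>R u) \<in> L2 M"
    unfolding L2_def using A int eq by auto
  have "(\<integral>\<omega>. indicator A \<omega> * (norm u)\<^sup>2 \<partial>M) = measure M A * (norm u)\<^sup>2"
    using A by simp
  then show "L2norm M (\<lambda>\<omega>. indicator A \<omega> *\<^sub>R u) = sqrt (measure M A) * norm u"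
    unfolding L2norm_def eq by (simp add: real_sqrt_mult)
qed

theorem lemma1p2:
  fixes M :: "'a measure"
    and f :: "('a \<Rightarrow> 'h::{real_inner, complete_space, second_countable_topology}) \<Rightarrow> 'u::{real_inner, complete_space, second_countable_topology}"
    and X0 :: "'a \<Rightarrow> 'h"
    and D :: "('a \<Rightarrow> 'h) \<Rightarrow> 'u"
  assumes "prob_space M"
    and "respects_ae M f"
    and "X0 \<in> L2 M"
    and "frechet_deriv_L2 M f X0 D"
  defines "m \<equiv> (\<lambda>A. Blinfun (\<lambda>u. D (\<lambda>\<omega>. indicator A \<omega> *\<^sub>R u)))"
  shows "(\<forall>A\<in>sets M. bounded_linear (\<lambda>u. D (\<lambda>\<omega>. indicator A \<omega> *\<^sub>R u)))
    \<and> m {} = 0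
    \<and> (\<forall>Ai :: nat \<Rightarrow> 'a set. range Ai \<subseteq> sets M \<longrightarrow> disjoint_family Ai \<longrightarrow>
          (\<lambda>i. m (Ai i)) sums m (\<Union>i. Ai i))"
proof -
  interpret prob_space M by fact
  have bl: "bounded_linear_L2 M D" using assms(4) unfolding frechet_deriv_L2_def by blast
  have add: "\<And>X Y. X \<in> L2 M \<Longrightarrow> Y \<in> L2 M \<Longrightarrow> D (\<lambda>\<omega>. X \<omega> + Y \<omega>) = D X + D Y"
    using bl unfolding bounded_linear_L2_def by blast
  have scl: "\<And>c X. X \<in> L2 M \<Longrightarrow> D (\<lambda>\<omega>. c *\<^sub>R X \<omega>) = c *\<^sub>R D X"
    using bl unfolding bounded_linear_L2_def by blast
  obtain K where K: "\<And>X. X \<in> L2 M \<Longrightarrow> norm (D X) \<le> K * L2norm M X"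
    using bl unfolding bounded_linear_L2_def by blast
  define C where "C = max K 0"
  have C0: "C \<ge> 0" unfolding C_def by simp
  have bnd: "norm (D (\<lambda>\<omega>. indicator A \<omega> *\<^sub>R u)) \<le> C * sqrt (measure M A) * norm u"
    if A: "A \<in> sets M" for A u
  proof -
    have "norm (D (\<lambda>\<omega>. indicator A \<omega> *\<^sub>R u)) \<le> K * (sqrt (measure M A) * norm u)"
      using K[OF ind_L2(1)[OF assms(1) A, of u]] ind_L2(2)[OF assms(1) A, of u] by simp
    also have "\<dots> \<le> C * (sqrt (measure M A) * norm u)"
      unfolding C_def by (intro mult_right_mono) auto
    finally show ?thesis by simp
  qed
  have blin: "bounded_linear (\<lambda>u. D (\<lambda>\<omega>. indicator A \<omega> *\<^sub>R u))" if A: "A \<in> sets M" for A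
  proof (rule bounded_linear_intro)
    fix u v :: 'h
    have "D (\<lambda>\<omega>. indicator A \<omega> *\<^sub>R (u + v))
        = D (\<lambda>\<omega>. indicator A \<omega> *\<^sub>R u + indicator A \<omega> *\<^sub>R v)"
      by (simp add: scaleR_right_distrib)
    also have "\<dots> = D (\<lambda>\<omega>. indicator A \<omega> *\<^sub>R u) + D (\<lambda>\<omega>. indicator A \<omega> *\<^sub>R v)"
      by (rule add) (use ind_L2(1)[OF assms(1) A] in auto)
    finally show "D (\<lambda>\<omega>. indicator A \<omega> *\<^sub>R (u + v))
        = D (\<lambda>\<omega>. indicator A \<omega> *\<^sub>R u) + D (\<lambda>\<omega>. indicator A \<omega> *\<^sub>R v)" .
  next
    fix r :: real and u :: 'h
    have "D (\<lambda>\<omega>. indicator A \<omega> *\<^sub>R (r *\<^sub>R u)) = D (\<lambda>\<omega>. r *\<^sub>R (indicator A \<omega> *\<^sub>R u))"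
      by (simp add: mult.commute)
    also have "\<dots> = r *\<^sub>R D (\<lambda>\<omega>. indicator A \<omega> *\<^sub>R u)"
      by (rule scl) (use ind_L2(1)[OF assms(1) A] in auto)
    finally show "D (\<lambda>\<omega>. indicator A \<omega> *\<^sub>R (r *\<^sub>R u)) = r *\<^sub>R D (\<lambda>\<omega>. indicator A \<omega> *\<^sub>R u)" .
  next
    fix u :: 'h
    show "norm (D (\<lambda>\<omega>. indicator A \<omega> *\<^sub>R u)) \<le> norm u * (C * sqrt (measure M A))"
      using bnd[OF A, of u] by (simp add: mult.commute mult.left_commute)
  qed
  have mapp: "blinfun_apply (m A) = (\<lambda>u. D (\<lambda>\<omega>. indicator A \<omega> *\<^sub>R u))" if "A \<in> sets M" for A
    unfolding m_def using blin[OF that] by (rule bounded_linear_Blinfun_apply)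
  have munion: "m (A \<union> B) = m A + m B" if "A \<in> sets M" "B \<in> sets M" "A \<inter> B = {}" for A B
  proof (rule blinfun_eqI)
    fix u
    have "D (\<lambda>\<omega>. indicator (A \<union> B) \<omega> *\<^sub>R u) = D (\<lambda>\<omega>. indicator A \<omega> *\<^sub>R u + indicator B \<omega> *\<^sub>R u)"
      using that(3) by (simp add: indicator_add[symmetric] scaleR_left_distrib)
    also have "\<dots> = D (\<lambda>\<omega>. indicator A \<omega> *\<^sub>R u) + D (\<lambda>\<omega>. indicator B \<omega> *\<^sub>R u)"
      by (rule add) (use ind_L2(1)[OF assms(1)] that in auto)
    finally show "blinfun_apply (m (A \<union> B)) u = blinfun_apply (m A + m B) u"
      using that by (simp add: mapp blinfun.add_left)
  qed
  have mnorm: "norm (m A) \<le> C * sqrt (measure M A)" if "A \<in> sets M" for A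
    by (rule norm_blinfun_bound) (use C0 bnd that mapp in auto)
  have m0: "m {} = 0"
    using munion[of "{}" "{}"] by simp
  have sums: "(\<lambda>i. m (Ai i)) sums m (\<Union>i. Ai i)"
    if R: "range Ai \<subseteq> sets M" and dj: "disjoint_family Ai" for Ai :: "nat \<Rightarrow> 'a set"
  proof -
    define B where "B n = (\<Union>i<n. Ai i)" for n
    have Bs: "B n \<in> sets M" for n unfolding B_def using R by auto
    have U: "(\<Union>i. Ai i) \<in> sets M" using R by auto
    have psum: "(\<Sum>i<n. m (Ai i)) = m (B n)" for n
    proof (induction n)
      case 0 then show ?case by (simp add: B_def m0)
    next
      case (Suc n)
      have bs: "B (Suc n) = B n \<union> Ai n" unfolding B_def by (auto simp: lessThan_Suc)
      have dd: "\<And>i. i < n \<Longrightarrow> Ai i \<inter> Ai n = {}" using dj by (simp add: disjoint_family_on_def)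
      have bd: "B n \<inter> Ai n = {}" unfolding B_def using dd by blast
      have "m (B (Suc n)) = m (B n) + m (Ai n)"
        unfolding bs using munion[OF Bs[of n] _ bd] R by simp
      then show ?case using Suc by simp
    qed
    have BU: "B n \<subseteq> (\<Union>i. Ai i)" for n unfolding B_def by auto
    have diff: "m (\<Union>i. Ai i) - m (B n) = m ((\<Union>i. Ai i) - B n)" for n
    proof -
      have e: "((\<Union>i. Ai i) - B n) \<union> B n = (\<Union>i. Ai i)" using BU by auto
      have d1: "(\<Union>i. Ai i) - B n \<in> sets M" using Bs U by auto
      have d2: "((\<Union>i. Ai i) - B n) \<inter> B n = {}" by auto
      have "m (\<Union>i. Ai i) = m ((\<Union>i. Ai i) - B n) + m (B n)"
        using munion[OF d1 Bs[of n] d2] unfolding e .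
      then show ?thesis by simp
    qed
    have incB: "incseq B" unfolding B_def incseq_def by (auto intro: order.strict_trans2)
    have UB: "(\<Union> (range B)) = (\<Union>i. Ai i)" unfolding B_def by auto
    have lim: "(\<lambda>n. measure M (B n)) \<longlonglongrightarrow> measure M (\<Union>i. Ai i)"
      using finite_measure.finite_Lim_measure_incseq[of M B] Bs incB UB
      by (auto simp: finite_measure_axioms)
    have "(\<lambda>n. C * sqrt (measure M (\<Union>i. Ai i) - measure M (B n))) \<longlonglongrightarrow> C * sqrt (measure M (\<Union>i. Ai i) - measure M (\<Union>i. Ai i))"
      by (intro tendsto_intros lim)
    then have g0: "(\<lambda>n. C * sqrt (measure M (\<Union>i. Ai i) - measure M (B n))) \<longlonglongrightarrow> 0" by simp
    have "(\<lambda>n. m (B n) - m (\<Union>i. Ai i)) \<longlonglongrightarrow> 0"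
    proof (rule Lim_null_comparison[OF _ g0], rule always_eventually, rule allI)
      fix n
      have "norm (m (B n) - m (\<Union>i. Ai i)) = norm (m ((\<Union>i. Ai i) - B n))"
        by (metis diff norm_minus_commute)
      also have "\<dots> \<le> C * sqrt (measure M ((\<Union>i. Ai i) - B n))"
        using mnorm U Bs by auto
      also have "measure M ((\<Union>i. Ai i) - B n) = measure M (\<Union>i. Ai i) - measure M (B n)"
        using finite_measure_Diff U Bs BU by auto
      finally show "norm (m (B n) - m (\<Union>i. Ai i)) \<le> C * sqrt (measure M (\<Union>i. Ai i) - measure M (B n))" .
    qed
    then show ?thesis unfolding sums_def psum by (rule LIM_zero_cancel)
  qed
  show ?thesis using blin m0 sums by blast
qed

end
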